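(* Fix a context-free grammar $G=(N,\Sigma,P,S)$. Let $M=(V,E,L)$ be a finite directed edge-labeled graph with $L\subseteq\Sigma$, $E\subseteq V\times L\times V$, and no two parallel edges with the same label, and let $V_s,V_f\subseteq V$ be sets of start and final vertices. Then the worst-case running time of the GLL-based graph parsing algorithm (described in the context) run on $G$ and $M$ is $$O\left(|V|^3\cdot\max_{v\in V}\deg^+(v)\right),$$ where $\deg^+(v)$ is the out-degree of $v$ in $M$, the constants depending only on $G$.
   Context: Paths and queries: a path in $M$ is a sequence of edges $(v_0,l_0,v_1),(v_1,l_1,v_2),\dots,(v_{n-1},l_{n-1},v_n)$ with $n\ge 1$; its word is $l_0l_1\cdots l_{n-1}$. The algorithm builds a representation of all paths $p$ from a vertex of $V_s$ to a vertex of $V_f$ whose word belongs to $\mathcal{L}(G)$. The GLL-based graph parsing algorithm: it is the table-driven generalized LL (GLL) parsing algorithm in which input positions are vertices of $M$ instead of indices into a string. A grammar slot is a production with a dot, $X\to\alpha\cdot\beta$. The algorithm maintains a graph-structured stack (GSS) whose nodes are labeled by pairs (grammar slot, vertex); descriptors $(L,u,i,w)$ with $L$ a grammar slot, $u$ a GSS node, $i\in V$ the current position and $w$ an SPPF node (or a dummy); a working set $R$ of descriptors to process, a set $U$ of all descriptors ever created (a descriptor is added to $R$ only if it is not already in $U$), and a set $P$ of popped (GSS node, SPPF node) pairs. Initially $R$ contains one initial descriptor for each vertex in $V_s$. Processing a descriptor at slot $X\to\alpha\cdot x\beta$ at vertex $i$: if $x$ is a terminal, then for every outgoing edge $e$ of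 $i$ with label $x$, the terminal SPPF node for $e$ is created/reused, combined with the current SPPF node, and a descriptor with slot $X\to\alpha x\cdot\beta$ and position the target of $e$ is added; if $x$ is a nonterminal, a GSS node for $(X\to\alpha x\cdot\beta, i)$ is created/reused (with an edge to the current GSS node labeled by the current SPPF node), and for every slot in the union, over outgoing edges $e$ of $i$, of the LL parse-table entries for $x$ and the label of $e$, a descriptor at position $i$ is added; at a slot $X\to\alpha\cdot$ the standard GLL pop operation is performed. All other operations (add, pop, create, SPPF node construction) are those of standard GLL. The algorithm terminates when $R$ is empty. The output is a binarized Shared Packed Parse Forest (SPPF) with terminal nodes $(v_0,T,v_1)$ for edges $(v_0,T,v_1)\in E$, $\varepsilon$-nodes $(v,\varepsilon,v)$, nonterminal nodes $(v_0,A,v_1)$, intermediate nodes $(v_0,t,v_1)$ with $t$ a grammar slot, and packed nodes $(A\to\alpha\cdot\beta,v)$ (children of nonterminal/intermediate nodes, with at most two children), each node created at most once per label. *)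

theory Defs
  imports Complex_Main
begin

datatype ('n,'t) sym = NT 'n | T 't

record ('n,'t) cfg =
  Nts   :: "'n set"
  Tms   :: "'t set"
  Prods :: "('n \<times> ('n,'t) sym list) set"
  Start :: 'n

definition cfg_wf :: "('n,'t) cfg \<Rightarrow> bool" where
  "cfg_wf G \<longleftrightarrow> finite (Nts G) \<and> finite (Tms G) \<and> finite (Prods G) \<and> Start G \<in> Nts G \<and>
     (\<forall>(X,\<alpha>) \<in> Prods G. X \<in> Nts G \<and>
        (\<forall>s \<in> set \<alpha>. (case s of NT A \<Rightarrow> A \<in> Nts G | T a \<Rightarrow> a \<in> Tms G)))"

text \<open>A grammar slot X -> alpha . beta is a production together with the dot position.\<close>
type_synonym ('n,'t) slot = "('n \<times> ('n,'t) sym list) \<times> nat"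

inductive nullable :: "('n,'t) cfg \<Rightarrow> ('n,'t) sym list \<Rightarrow> bool" for G where
  nullable_Nil: "nullable G []"
| nullable_Cons: "(A,\<alpha>) \<in> Prods G \<Longrightarrow> nullable G \<alpha> \<Longrightarrow> nullable G xs \<Longrightarrow> nullable G (NT A # xs)"

inductive first :: "('n,'t) cfg \<Rightarrow> ('n,'t) sym list \<Rightarrow> 't \<Rightarrow> bool" for G where
  first_T: "first G (T a # xs) a"
| first_NT: "(A,\<alpha>) \<in> Prods G \<Longrightarrow> first G \<alpha> a \<Longrightarrow> first G (NT A # xs) a"
| first_skip: "nullable G [x] \<Longrightarrow> first G xs a \<Longrightarrow> first G (x # xs) a"

inductive follow :: "('n,'t) cfg \<Rightarrow> 'n \<Rightarrow> 't \<Rightarrow> bool" for G where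
  follow_first: "(X, \<alpha> @ NT Y # \<beta>) \<in> Prods G \<Longrightarrow> first G \<beta> a \<Longrightarrow> follow G Y a"
| follow_follow: "(X, \<alpha> @ NT Y # \<beta>) \<in> Prods G \<Longrightarrow> nullable G \<beta> \<Longrightarrow> follow G X a \<Longrightarrow> follow G Y a"

definition table :: "('n,'t) cfg \<Rightarrow> 'n \<Rightarrow> 't \<Rightarrow> ('n,'t) slot set" where
  "table G Y a = {((Y,\<alpha>),0) | \<alpha>. (Y,\<alpha>) \<in> Prods G \<and>
                    (first G \<alpha> a \<or> (nullable G \<alpha> \<and> follow G Y a))}"

definition outE :: "('v \<times> 't \<times> 'v) set \<Rightarrow> 'v \<Rightarrow> ('v \<times> 't \<times> 'v) set" where
  "outE E v = {e \<in> E. fst e = v}"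

definition outdeg :: "('v \<times> 't \<times> 'v) set \<Rightarrow> 'v \<Rightarrow> nat" where
  "outdeg E v = card (outE E v)"

definition maxdeg :: "'v set \<Rightarrow> ('v \<times> 't \<times> 'v) set \<Rightarrow> nat" where
  "maxdeg V E = Max (insert 0 (outdeg E ` V))"

text \<open>SPPF nodes: Dummy is the dummy node; terminal nodes (v0,T,v1); epsilon nodes (v,eps,v);
  nonterminal nodes (v0,A,v1); intermediate nodes (v0,t,v1) with t a slot.\<close>
datatype ('n,'t,'v) sppf =
    Dummy
  | TNode 'v 't 'v
  | ENode 'v
  | NNode 'v 'n 'v
  | INode 'v "('n,'t) slot" 'v

text \<open>Packed node: (parent, slot, pivot vertex, children).\<close>
type_synonym ('n,'t,'v) pnode = "('n,'t,'v) sppf \<times> ('n,'t) slot \<times> 'v \<times> ('n,'t,'v) sppf list"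

datatype ('n,'t,'v) gss = U0 | GNode "('n,'t) slot" 'v

text \<open>Descriptor labels: the start code label L_S (initial descriptors) or a grammar slot.\<close>
datatype ('n,'t) lab = LStart | LSlot "('n,'t) slot"

type_synonym ('n,'t,'v) desc = "('n,'t) lab \<times> ('n,'t,'v) gss \<times> 'v \<times> ('n,'t,'v) sppf"

fun lext :: "('n,'t,'v) sppf \<Rightarrow> 'v" where
  "lext (TNode a _ _) = a" | "lext (ENode a) = a" | "lext (NNode a _ _) = a"
| "lext (INode a _ _) = a" | "lext Dummy = undefined"

fun rext :: "('n,'t,'v) sppf \<Rightarrow> 'v" where
  "rext (TNode _ _ b) = b" | "rext (ENode b) = b" | "rext (NNode _ _ b) = b"
| "rext (INode _ _ b) = b" | "rext Dummy = undefined"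

text \<open>Standard binarised GLL getNodeP(X -> alpha . beta, w, z): returns the resulting node
  together with the packed node it requires (sets: nodes are created at most once per label).\<close>
definition getNodeP :: "('n,'t) cfg \<Rightarrow> ('n,'t) slot \<Rightarrow> ('n,'t,'v) sppf \<Rightarrow> ('n,'t,'v) sppf
     \<Rightarrow> ('n,'t,'v) sppf \<times> ('n,'t,'v) pnode set" where
  "getNodeP G L w z = (case L of ((X,\<gamma>),d) \<Rightarrow>
     if d = 1 \<and> d < length \<gamma> \<and> (case hd \<gamma> of T _ \<Rightarrow> True | NT A \<Rightarrow> \<not> nullable G [NT A])
     then (z, {})
     else (let k = lext z; i = rext z;
               mk = (\<lambda>j. if d = length \<gamma> then NNode j X i else INode j L i) in
           if w \<noteq> Dummy then (let y = mk (lext w) in (y, {(y, L, k, [w, z])}))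
           else (let y = mk k in (y, {(y, L, k, [z])}))))"

record ('n,'t,'v) gstate =
  R    :: "('n,'t,'v) desc set"
  U    :: "('n,'t,'v) desc set"
  Pset :: "(('n,'t,'v) gss \<times> ('n,'t,'v) sppf) set"
  GE   :: "(('n,'t,'v) gss \<times> ('n,'t,'v) sppf \<times> ('n,'t,'v) gss) set"
  SN   :: "('n,'t,'v) sppf set"
  SP   :: "('n,'t,'v) pnode set"

definition addDs :: "('n,'t,'v) desc set \<Rightarrow> ('n,'t,'v) gstate \<Rightarrow> ('n,'t,'v) gstate" where
  "addDs D st = st\<lparr>R := R st \<union> (D - U st), U := U st \<union> D\<rparr>"

definition addSPPF :: "('n,'t,'v) sppf set \<Rightarrow> ('n,'t,'v) pnode set \<Rightarrow> ('n,'t,'v) gstate \<Rightarrow> ('n,'t,'v) gstate" where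
  "addSPPF ns ps st = st\<lparr>SN := SN st \<union> ns, SP := SP st \<union> ps\<rparr>"

definition tslots :: "('n,'t) cfg \<Rightarrow> ('v \<times> 't \<times> 'v) set \<Rightarrow> 'v \<Rightarrow> 'n \<Rightarrow> (('v \<times> 't \<times> 'v) \<times> ('n,'t) slot) set" where
  "tslots G E i Y = {(e,s). e \<in> outE E i \<and> s \<in> table G Y (fst (snd e))}"

text \<open>Cost model: each primitive operation (set lookup/insert, node creation, add) is O(1);
  the cost of an action is 1 plus the number of iterations of each loop it executes.\<close>

definition popS :: "('n,'t) cfg \<Rightarrow> ('n,'t,'v) gss \<Rightarrow> 'v \<Rightarrow> ('n,'t,'v) sppf \<Rightarrow> ('n,'t,'v) gstate
    \<Rightarrow> ('n,'t,'v) gstate \<times> nat" where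
  "popS G u i z st = (case u of
      U0 \<Rightarrow> (st, 1)
    | GNode Lu k \<Rightarrow>
        (let es = {(w',v). (u,w',v) \<in> GE st} in
         (addDs {(LSlot Lu, v, i, fst (getNodeP G Lu w' z)) | w' v. (w',v) \<in> es}
            (addSPPF {fst (getNodeP G Lu w' z) | w' v. (w',v) \<in> es}
                     (\<Union>(w',v)\<in>es. snd (getNodeP G Lu w' z))
                     (st\<lparr>Pset := insert (u,z) (Pset st)\<rparr>)),
          1 + card es)))"

text \<open>Processing one descriptor (already removed from R); returns new state and cost.\<close>
definition process :: "('n,'t) cfg \<Rightarrow> ('v \<times> 't \<times> 'v) set \<Rightarrow> ('n,'t,'v) desc \<Rightarrow> ('n,'t,'v) gstate
    \<Rightarrow> ('n,'t,'v) gstate \<times> nat" where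
  "process G E d st = (case d of (lb, u, i, w) \<Rightarrow> (case lb of
     LStart \<Rightarrow>
       (addDs {(LSlot s, U0, i, Dummy) | s. \<exists>e. (e,s) \<in> tslots G E i (Start G)} st,
        1 + outdeg E i + card (tslots G E i (Start G)))
   | LSlot L \<Rightarrow> (case L of ((X,\<gamma>),k) \<Rightarrow>
      if k < length \<gamma> then
        (let L' = ((X,\<gamma>), Suc k) in
         case \<gamma> ! k of
           T a \<Rightarrow>
             (let Js = {j. (i,a,j) \<in> E} in
              (addDs {(LSlot L', u, j, fst (getNodeP G L' w (TNode i a j))) | j. j \<in> Js}
                 (addSPPF ({TNode i a j | j. j \<in> Js} \<union> {fst (getNodeP G L' w (TNode i a j)) | j. j \<in> Js})
                          (\<Union>j\<in>Js. snd (getNodeP G L' w (TNode i a j))) st),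
               1 + outdeg E i))
         | NT Y \<Rightarrow>
             (let v = GNode L' i;
                  D2 = {(LSlot s, v, i, Dummy) | s. \<exists>e. (e,s) \<in> tslots G E i Y};
                  c2 = outdeg E i + card (tslots G E i Y) in
              if (v,w,u) \<in> GE st then (addDs D2 st, 1 + c2)
              else
                (let zs = {z. (v,z) \<in> Pset st} in
                 (addDs D2
                   (addDs {(LSlot L', u, rext z, fst (getNodeP G L' w z)) | z. z \<in> zs}
                     (addSPPF {fst (getNodeP G L' w z) | z. z \<in> zs}
                              (\<Union>z\<in>zs. snd (getNodeP G L' w z))
                              (st\<lparr>GE := insert (v,w,u) (GE st)\<rparr>))),
                  1 + card zs + c2))))
      else if \<gamma> = [] then
        (let y = getNodeP G L w (ENode i);
             r = popS G u i (fst y) (addSPPF {ENode i, fst y} (snd y) st) in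
         (fst r, 1 + snd r))
      else popS G u i w st)))"

definition init :: "'v set \<Rightarrow> ('n,'t,'v) gstate" where
  "init Vs = \<lparr>R = {(LStart, U0, v, Dummy) | v. v \<in> Vs}, U = {(LStart, U0, v, Dummy) | v. v \<in> Vs},
              Pset = {}, GE = {}, SN = {}, SP = {}\<rparr>"

inductive runs :: "('n,'t) cfg \<Rightarrow> ('v \<times> 't \<times> 'v) set \<Rightarrow> ('n,'t,'v) gstate \<Rightarrow> nat \<Rightarrow> ('n,'t,'v) gstate \<Rightarrow> bool"
  for G E where
  runs_refl: "runs G E st 0 st"
| runs_step: "runs G E st c st' \<Longrightarrow> d \<in> R st' \<Longrightarrow> process G E d (st'\<lparr>R := R st' - {d}\<rparr>) = (st'', c')
     \<Longrightarrow> runs G E st (c + c') st''"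

end

theory Submission
  imports Defs
begin

definition slots :: "('n,'t) cfg \<Rightarrow> ('n,'t) slot set" where
  "slots G = {(p,k). p \<in> Prods G \<and> k \<le> length (snd p)}"

fun gssv :: "('n,'t,'v) gss \<Rightarrow> 'v option" where
  "gssv U0 = None" | "gssv (GNode _ m) = Some m"

fun gwf :: "('n,'t) cfg \<Rightarrow> 'v set \<Rightarrow> ('n,'t,'v) gss \<Rightarrow> bool" where
  "gwf G V U0 = True" | "gwf G V (GNode L m) = (L \<in> slots G \<and> m \<in> V)"

fun nwf :: "('n,'t) cfg \<Rightarrow> 'v set \<Rightarrow> ('n,'t,'v) sppf \<Rightarrow> bool" where
  "nwf G V Dummy = False"
| "nwf G V (TNode a t b) = (a \<in> V \<and> t \<in> Tms G \<and> b \<in> V)"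
| "nwf G V (ENode a) = (a \<in> V)"
| "nwf G V (NNode a X b) = (a \<in> V \<and> X \<in> Nts G \<and> b \<in> V)"
| "nwf G V (INode a L b) = (a \<in> V \<and> L \<in> slots G \<and> b \<in> V)"

fun dinv :: "('n,'t) cfg \<Rightarrow> 'v set \<Rightarrow> ('n,'t,'v) desc \<Rightarrow> bool" where
  "dinv G V (LStart, u, i, w) = (u = U0 \<and> w = Dummy \<and> i \<in> V)"
| "dinv G V (LSlot L, u, i, w) = (L \<in> slots G \<and> gwf G V u \<and> i \<in> V \<and> (snd L = 0 \<longleftrightarrow> w = Dummy)
     \<and> (w = Dummy \<longrightarrow> gssv u \<noteq> None \<longrightarrow> gssv u = Some i)
     \<and> (w \<noteq> Dummy \<longrightarrow> nwf G V w \<and> rext w = i \<and> (\<forall>m. gssv u = Some m \<longrightarrow> lext w = m)))"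

definition geinv :: "('n,'t) cfg \<Rightarrow> 'v set \<Rightarrow> (('n,'t,'v) gss \<times> ('n,'t,'v) sppf \<times> ('n,'t,'v) gss) \<Rightarrow> bool" where
  "geinv G V e = (case e of (g, w', v) \<Rightarrow> (\<exists>p k m. g = GNode (p, Suc k) m \<and> k < length (snd p) \<and> dinv G V (LSlot (p,k), v, m, w')))"

definition pinv :: "('n,'t) cfg \<Rightarrow> 'v set \<Rightarrow> (('n,'t,'v) gss \<times> ('n,'t,'v) sppf) \<Rightarrow> bool" where
  "pinv G V pz = (case pz of (u,z) \<Rightarrow> nwf G V z \<and> (\<forall>m. gssv u = Some m \<longrightarrow> lext z = m))"

definition inv :: "('n,'t) cfg \<Rightarrow> 'v set \<Rightarrow> ('n,'t,'v) gstate \<Rightarrow> bool" where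
  "inv G V st = (R st \<subseteq> U st \<and> (\<forall>d\<in>U st. dinv G V d) \<and> (\<forall>e\<in>GE st. geinv G V e) \<and> (\<forall>p\<in>Pset st. pinv G V p))"

lemma nwf_ext: "nwf G V z \<Longrightarrow> lext z \<in> V \<and> rext z \<in> V \<and> z \<noteq> Dummy"
  by (cases z) auto

lemma next_ok:
  assumes wf: "cfg_wf G" and d: "dinv G V (LSlot ((X,\<gamma>),k), u, i, w)" and kl: "k < length \<gamma>"
    and z: "nwf G V z" "lext z = i" "rext z = j"
  shows "dinv G V (LSlot ((X,\<gamma>),Suc k), u, j, fst (getNodeP G ((X,\<gamma>),Suc k) w z))"
proof -
  have P: "(X,\<gamma>) \<in> Prods G" using d by (simp add: slots_def)
  hence X: "X \<in> Nts G" using wf unfolding cfg_wf_def by blast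
  have sl: "((X,\<gamma>),Suc k) \<in> slots G" using P kl by (simp add: slots_def)
  have zz: "lext z \<in> V" "rext z \<in> V" "z \<noteq> Dummy" using nwf_ext[OF z(1)] by auto
  show ?thesis
    using d z zz X sl kl unfolding getNodeP_def Let_def
    by (auto simp: nwf_ext split: if_splits)
qed


lemma addDs_simps[simp]: "R (addDs D st) = R st \<union> (D - U st)" "U (addDs D st) = U st \<union> D"
  "GE (addDs D st) = GE st" "Pset (addDs D st) = Pset st"
  by (simp_all add: addDs_def)

lemma addSPPF_simps[simp]: "R (addSPPF a b st) = R st" "U (addSPPF a b st) = U st"
  "GE (addSPPF a b st) = GE st" "Pset (addSPPF a b st) = Pset st"
  by (simp_all add: addSPPF_def)

definition mono_st :: "('n,'t,'v) gstate \<Rightarrow> ('n,'t,'v) gstate \<Rightarrow> bool" where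
  "mono_st st st1 = (U st \<subseteq> U st1 \<and> R st1 \<subseteq> R st \<union> (U st1 - U st))"

lemma pop_inv:
  assumes wf: "cfg_wf G" and I: "inv G V st" and gu: "gwf G V u" and z: "nwf G V z" "rext z = i"
    and zl: "\<forall>m. gssv u = Some m \<longrightarrow> lext z = m"
    and P: "popS G u i z st = (st1, c)"
  shows "inv G V st1 \<and> mono_st st st1"
proof (cases u)
  case U0
  then show ?thesis using P I by (auto simp: popS_def mono_st_def)
next
  case (GNode Lu k)
  let ?es = "{(w',v). (u,w',v) \<in> GE st}"
  have st1: "st1 = addDs {(LSlot Lu, v, i, fst (getNodeP G Lu w' z)) | w' v. (w',v) \<in> ?es}
            (addSPPF {fst (getNodeP G Lu w' z) | w' v. (w',v) \<in> ?es}
                     (\<Union>(w',v)\<in>?es. snd (getNodeP G Lu w' z))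
                     (st\<lparr>Pset := insert (u,z) (Pset st)\<rparr>))"
    using P GNode by (simp add: popS_def Let_def)
  have lz: "lext z = k" using zl GNode by simp
  have new: "dinv G V (LSlot Lu, v, i, fst (getNodeP G Lu w' z))" if "(u,w',v) \<in> GE st" for w' v
  proof -
    have "geinv G V (u,w',v)" using I that unfolding inv_def by blast
    then obtain p kk m where A: "u = GNode (p, Suc kk) m" "kk < length (snd p)" "dinv G V (LSlot (p,kk), v, m, w')"
      unfolding geinv_def by auto
    obtain X \<gamma> where p: "p = (X,\<gamma>)" by (cases p)
    have "Lu = (p, Suc kk)" "m = k" using A GNode by auto
    then show ?thesis using next_ok[OF wf, where V=V and X=X and \<gamma>=\<gamma> and k=kk and u=v and i=k and w=w' and z=z and j=i] A p z lz by simp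
  qed
  have pz: "pinv G V (u,z)" using z lz GNode by (simp add: pinv_def)
  show ?thesis using I new pz unfolding st1 inv_def mono_st_def by auto
qed


lemma mono_trans: "mono_st a b \<Longrightarrow> mono_st b c \<Longrightarrow> mono_st a c"
  unfolding mono_st_def by blast

lemma finite_slots: "cfg_wf G \<Longrightarrow> finite (slots G)"
proof -
  assume wf: "cfg_wf G"
  have "slots G = (\<Union>p\<in>Prods G. (\<lambda>k. (p,k)) ` {..length (snd p)})"
    unfolding slots_def by auto
  moreover have "finite (Prods G)" using wf by (simp add: cfg_wf_def)
  ultimately show ?thesis by simp
qed

lemma table_slots: "s \<in> table G Y a \<Longrightarrow> s \<in> slots G \<and> snd s = 0"
  unfolding table_def slots_def by auto

lemma tslots_slots: "(e,s) \<in> tslots G E i Y \<Longrightarrow> s \<in> slots G \<and> snd s = 0"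
  unfolding tslots_def using table_slots[of s G Y "fst (snd e)"] by auto

lemma card4: "card (A \<union> B \<union> C \<union> D) \<le> card A + card B + card C + card D"
  by (meson add_le_mono card_Un_le le_refl order_trans)

lemma card_img_prod: "finite A \<Longrightarrow> finite B \<Longrightarrow> card (f ` (A \<times> B)) \<le> card A * card B"
  by (metis card_cartesian_product card_image_le finite_cartesian_product)

lemma nodesL:
  fixes G :: "('n,'t) cfg" and V :: "'v set"
  assumes wf: "cfg_wf G" and fin: "finite V"
  shows "finite {z::('n,'t,'v) sppf. nwf G V z \<and> lext z = i} \<and>
    card {z. nwf G V z \<and> lext z = i} \<le> card V * (card (Tms G) + card (Nts G) + card (slots G)) + 1"
proof -
  have fT: "finite (Tms G)" and fN: "finite (Nts G)" using wf by (auto simp: cfg_wf_def)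
  have fS: "finite (slots G)" using finite_slots[OF wf] .
  let ?A = "(\<lambda>(t,b). TNode i t b) ` (Tms G \<times> V) :: ('n,'t,'v) sppf set"
  let ?C = "(\<lambda>(X,b). NNode i X b) ` (Nts G \<times> V) :: ('n,'t,'v) sppf set"
  let ?D = "(\<lambda>(L,b). INode i L b) ` (slots G \<times> V) :: ('n,'t,'v) sppf set"
  have sub: "{z. nwf G V z \<and> lext z = i} \<subseteq> ?A \<union> {ENode i :: ('n,'t,'v) sppf} \<union> ?C \<union> ?D"
  proof
    fix z assume "z \<in> {z. nwf G V z \<and> lext z = i}"
    then show "z \<in> ?A \<union> {ENode i :: ('n,'t,'v) sppf} \<union> ?C \<union> ?D" by (cases z) auto
  qed
  have f: "finite (?A \<union> {ENode i :: ('n,'t,'v) sppf} \<union> ?C \<union> ?D)" using fT fN fS fin by auto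
  have "card (?A \<union> {ENode i :: ('n,'t,'v) sppf} \<union> ?C \<union> ?D) \<le> card ?A + card {ENode i :: ('n,'t,'v) sppf} + card ?C + card ?D" by (rule card4)
  also have "\<dots> \<le> card (Tms G) * card V + 1 + card (Nts G) * card V + card (slots G) * card V"
    using card_img_prod[OF fT fin] card_img_prod[OF fN fin] card_img_prod[OF fS fin]
    by (intro add_mono) auto
  finally have "card (?A \<union> {ENode i :: ('n,'t,'v) sppf} \<union> ?C \<union> ?D) \<le> card V * (card (Tms G) + card (Nts G) + card (slots G)) + 1"
    by (simp add: algebra_simps)
  then show ?thesis using card_mono[OF f sub] finite_subset[OF sub f] by linarith
qed

lemma nodesR:
  fixes G :: "('n,'t) cfg" and V :: "'v set"
  assumes wf: "cfg_wf G" and fin: "finite V"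
  shows "finite {z::('n,'t,'v) sppf. nwf G V z \<and> rext z = i} \<and>
    card {z. nwf G V z \<and> rext z = i} \<le> card V * (card (Tms G) + card (Nts G) + card (slots G)) + 1"
proof -
  have fT: "finite (Tms G)" and fN: "finite (Nts G)" using wf by (auto simp: cfg_wf_def)
  have fS: "finite (slots G)" using finite_slots[OF wf] .
  let ?A = "(\<lambda>(t,b). TNode b t i) ` (Tms G \<times> V) :: ('n,'t,'v) sppf set"
  let ?C = "(\<lambda>(X,b). NNode b X i) ` (Nts G \<times> V) :: ('n,'t,'v) sppf set"
  let ?D = "(\<lambda>(L,b). INode b L i) ` (slots G \<times> V) :: ('n,'t,'v) sppf set"
  have sub: "{z. nwf G V z \<and> rext z = i} \<subseteq> ?A \<union> {ENode i :: ('n,'t,'v) sppf} \<union> ?C \<union> ?D"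
  proof
    fix z assume "z \<in> {z. nwf G V z \<and> rext z = i}"
    then show "z \<in> ?A \<union> {ENode i :: ('n,'t,'v) sppf} \<union> ?C \<union> ?D" by (cases z) auto
  qed
  have f: "finite (?A \<union> {ENode i :: ('n,'t,'v) sppf} \<union> ?C \<union> ?D)" using fT fN fS fin by auto
  have "card (?A \<union> {ENode i :: ('n,'t,'v) sppf} \<union> ?C \<union> ?D) \<le> card ?A + card {ENode i :: ('n,'t,'v) sppf} + card ?C + card ?D" by (rule card4)
  also have "\<dots> \<le> card (Tms G) * card V + 1 + card (Nts G) * card V + card (slots G) * card V"
    using card_img_prod[OF fT fin] card_img_prod[OF fN fin] card_img_prod[OF fS fin]
    by (intro add_mono) auto
  finally have "card (?A \<union> {ENode i :: ('n,'t,'v) sppf} \<union> ?C \<union> ?D) \<le> card V * (card (Tms G) + card (Nts G) + card (slots G)) + 1"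
    by (simp add: algebra_simps)
  then show ?thesis using card_mono[OF f sub] finite_subset[OF sub f] by linarith
qed


definition B1 :: "('n,'t) cfg \<Rightarrow> 'v set \<Rightarrow> nat" where
  "B1 G V = card V * (card (Tms G) + card (Nts G) + card (slots G)) + 1"

definition Dm :: "'v set \<Rightarrow> ('v \<times> 't \<times> 'v) set \<Rightarrow> nat" where
  "Dm V E = max 1 (maxdeg V E)"

lemma es_bound:
  fixes G :: "('n,'t) cfg" and V :: "'v set" and st :: "('n,'t,'v) gstate"
  assumes wf: "cfg_wf G" and fin: "finite V" and GI: "\<forall>e\<in>GE st. geinv G V e"
  shows "card {(w',v). (GNode Lu k, w', v) \<in> GE st} \<le> (1 + card (slots G)) * (1 + B1 G V)"
proof -
  let ?S = "insert None (Some ` slots G)"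
  let ?NR = "{z::('n,'t,'v) sppf. nwf G V z \<and> rext z = k}"
  let ?A = "{Dummy} \<times> insert U0 ((\<lambda>L. GNode L k) ` slots G) :: (('n,'t,'v) sppf \<times> ('n,'t,'v) gss) set"
  let ?f = "(\<lambda>(w'::('n,'t,'v) sppf, ol). (w', case ol of None \<Rightarrow> U0 | Some L \<Rightarrow> GNode L (lext w')))"
  let ?B = "?f ` (?NR \<times> ?S)"
  have fS: "finite (slots G)" using finite_slots[OF wf] .
  have NR: "finite ?NR" "card ?NR \<le> B1 G V" using nodesR[OF wf fin, of k] by (auto simp: B1_def)
  have sub: "{(w',v). (GNode Lu k, w', v) \<in> GE st} \<subseteq> ?A \<union> ?B"
  proof
    fix x assume "x \<in> {(w',v). (GNode Lu k, w', v) \<in> GE st}"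
    then obtain w' v where x: "x = (w',v)" and e: "(GNode Lu k, w', v) \<in> GE st" by (cases x) auto
    have "geinv G V (GNode Lu k, w', v)" using GI e by blast
    then obtain p kk where dv: "dinv G V (LSlot (p,kk), v, k, w')" unfolding geinv_def by auto
    show "x \<in> ?A \<union> ?B"
    proof (cases "w' = Dummy")
      case True
      then show ?thesis using dv x by (cases v) auto
    next
      case False
      show ?thesis
      proof (cases v)
        case U0
        then have "x = ?f (w', None)" using x by simp
        moreover have "(w', None) \<in> ?NR \<times> ?S" using dv False by auto
        ultimately show ?thesis by blast
      next
        case (GNode L m)
        then have "x = ?f (w', Some L)" using x dv False by simp
        moreover have "(w', Some L) \<in> ?NR \<times> ?S" using dv False GNode by auto
        ultimately show ?thesis by blast
      qed
    qed
  qed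
  have cS: "card ?S \<le> 1 + card (slots G)"
    using card_image_le[OF fS, of Some] by (simp add: card_insert_if fS)
  have fA: "finite ?A" using fS by auto
  have fB: "finite ?B" using fS NR by auto
  have "card ?A \<le> card {Dummy::('n,'t,'v) sppf} * card (insert U0 ((\<lambda>L. GNode L k) ` slots G) :: ('n,'t,'v) gss set)"
    by (rule eq_imp_le, rule card_cartesian_product)
  also have "\<dots> \<le> 1 + card (slots G)"
    using card_insert_le_m1 card_image_le[OF fS, of "\<lambda>L. GNode L k"]
    by (simp add: card_insert_if fS)
  finally have cA: "card ?A \<le> 1 + card (slots G)" .
  have "card ?B \<le> card (?NR \<times> ?S)" by (rule card_image_le) (use NR fS in auto)
  also have "\<dots> = card ?NR * card ?S" by (rule card_cartesian_product)
  also have "\<dots> \<le> B1 G V * (1 + card (slots G))" using NR cS by (intro mult_le_mono) auto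
  finally have cB: "card ?B \<le> B1 G V * (1 + card (slots G))" .
  have "card {(w',v). (GNode Lu k, w', v) \<in> GE st} \<le> card (?A \<union> ?B)"
    using fA fB sub by (intro card_mono) auto
  also have "\<dots> \<le> card ?A + card ?B" by (rule card_Un_le)
  also have "\<dots> \<le> (1 + card (slots G)) * (1 + B1 G V)" using cA cB by (simp add: algebra_simps)
  finally show ?thesis .
qed


lemma pop_cost:
  assumes P: "popS G u i z st = (st1, c)" and wf: "cfg_wf G" and fin: "finite V"
    and GI: "\<forall>e\<in>GE st. geinv G V e"
  shows "c \<le> 1 + (1 + card (slots G)) * (1 + B1 G V)"
proof (cases u)
  case U0 then show ?thesis using P by (simp add: popS_def)
next
  case (GNode Lu k)
  then have "c = 1 + card {(w',v). (GNode Lu k, w', v) \<in> GE st}" using P by (simp add: popS_def Let_def)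
  then show ?thesis using es_bound[OF wf fin GI, of Lu k] by simp
qed

lemma outdeg_le: "finite V \<Longrightarrow> i \<in> V \<Longrightarrow> outdeg E i \<le> Dm V E"
  unfolding Dm_def maxdeg_def
  by (metis (no_types, lifting) Max_ge finite_imageI finite_insert image_eqI insertCI le_max_iff_disj)

lemma tslots_card:
  assumes "finite E" "finite (slots G)"
  shows "card (tslots G E i Y) \<le> outdeg E i * card (slots G)"
proof -
  have "tslots G E i Y \<subseteq> outE E i \<times> slots G"
    unfolding tslots_def using table_slots by fastforce
  moreover have "finite (outE E i)" using assms(1) unfolding outE_def by auto
  ultimately have "card (tslots G E i Y) \<le> card (outE E i \<times> slots G)"
    using assms(2) by (intro card_mono) auto
  then show ?thesis by (simp add: card_cartesian_product outdeg_def)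
qed

lemma inv_addSPPF[simp]: "inv G V (addSPPF a b st) = inv G V st"
  by (simp add: inv_def)

lemma mono_addSPPF[simp]: "mono_st st (addSPPF a b st)"
  by (simp add: mono_st_def)

lemma inv_addDs: "inv G V st \<Longrightarrow> \<forall>x\<in>D. dinv G V x \<Longrightarrow> inv G V (addDs D st)"
  unfolding inv_def addDs_simps by blast

lemma mono_addDs: "mono_st st (addDs D st)"
  by (auto simp: mono_st_def)

lemma inv_GE: "inv G V st \<Longrightarrow> geinv G V e \<Longrightarrow> inv G V (st\<lparr>GE := insert e (GE st)\<rparr>)"
  unfolding inv_def by simp

lemma mono_GE: "mono_st st (st\<lparr>GE := x\<rparr>)"
  by (auto simp: mono_st_def)

definition Kc :: "('n,'t) cfg \<Rightarrow> 'v set \<Rightarrow> ('v \<times> 't \<times> 'v) set \<Rightarrow> nat" where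
  "Kc G V E = 2 + B1 G V + Dm V E * (1 + card (slots G)) + (1 + card (slots G)) * (1 + B1 G V)"


lemma process_ok:
  fixes G :: "('n,'t) cfg" and V :: "'v set" and st :: "('n,'t,'v) gstate"
  assumes wf: "cfg_wf G" and fin: "finite V" and Esub: "E \<subseteq> V \<times> Tms G \<times> V"
    and I: "inv G V st" and dd: "dinv G V d" and P: "process G E d st = (st1, c)"
  shows "inv G V st1 \<and> mono_st st st1 \<and> c \<le> Kc G V E"
proof -
  have fS: "finite (slots G)" using finite_slots[OF wf] .
  have fE: "finite E" using Esub fin wf by (auto simp: cfg_wf_def intro: finite_subset)
  have od: "\<And>i. i \<in> V \<Longrightarrow> outdeg E i \<le> Dm V E" using outdeg_le[OF fin] by blast
  have ts: "\<And>i Y. i \<in> V \<Longrightarrow> card (tslots G E i Y) \<le> Dm V E * card (slots G)"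
    using tslots_card[OF fE fS] od by (meson le_trans mult_le_mono1)
  have GI: "\<forall>e\<in>GE st. geinv G V e" and PI: "\<forall>p\<in>Pset st. pinv G V p" and DI: "\<forall>d\<in>U st. dinv G V d"
    and RU: "R st \<subseteq> U st"
    using I by (auto simp: inv_def)
  obtain lb u i w where d: "d = (lb,u,i,w)" by (cases d) auto
  show ?thesis
  proof (cases lb)
    case LStart
    hence u: "u = U0" "w = Dummy" "i \<in> V" using dd d by auto
    let ?D = "{(LSlot s, U0, i, Dummy) | s. \<exists>e. (e,s) \<in> tslots G E i (Start G)} :: ('n,'t,'v) desc set"
    have P': "st1 = addDs ?D st" "c = 1 + outdeg E i + card (tslots G E i (Start G))"
      using P d LStart by (simp_all add: process_def)
    have "\<forall>x\<in>?D. dinv G V x" using tslots_slots u(3) by fastforce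
    then have "inv G V st1" using I unfolding P' by (simp add: inv_addDs)
    moreover have "mono_st st st1" unfolding P' by (rule mono_addDs)
    moreover have "c \<le> Kc G V E" using P'(2) od[OF u(3)] ts[OF u(3), of "Start G"]
      unfolding Kc_def by (simp add: algebra_simps)
    ultimately show ?thesis by blast
  next
    case (LSlot L)
    obtain X \<gamma> k where L: "L = ((X,\<gamma>),k)" by (cases L) auto
    have dL: "dinv G V (LSlot ((X,\<gamma>),k), u, i, w)" using dd d LSlot L by simp
    have iV: "i \<in> V" using dL by simp
    have Pr: "(X,\<gamma>) \<in> Prods G" using dL by (simp add: slots_def)
    have XN: "X \<in> Nts G" using wf Pr unfolding cfg_wf_def by blast
    have kle: "k \<le> length \<gamma>" using dL by (simp add: slots_def)
    show ?thesis
    proof (cases "k < length \<gamma>")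
      case True
      let ?L' = "((X,\<gamma>), Suc k)"
      have sl': "?L' \<in> slots G" using Pr True by (simp add: slots_def)
      show ?thesis
      proof (cases "\<gamma> ! k")
        case (T a)
        let ?Js = "{j. (i,a,j) \<in> E}"
        have "process G E d st = (addDs {(LSlot ?L', u, j, fst (getNodeP G ?L' w (TNode i a j))) | j. j \<in> ?Js}
                 (addSPPF ({TNode i a j | j. j \<in> ?Js} \<union> {fst (getNodeP G ?L' w (TNode i a j)) | j. j \<in> ?Js})
                          (\<Union>j\<in>?Js. snd (getNodeP G ?L' w (TNode i a j))) st),
               1 + outdeg E i)"
          unfolding d LSlot L process_def using True T by (simp only: Let_def lab.case prod.case sym.case if_True)
        then have P': "st1 = addDs {(LSlot ?L', u, j, fst (getNodeP G ?L' w (TNode i a j))) | j. j \<in> {j. (i,a,j) \<in> E}}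
                  (addSPPF ({TNode i a j | j. j \<in> ?Js} \<union> {fst (getNodeP G ?L' w (TNode i a j)) | j. j \<in> ?Js})
                          (\<Union>j\<in>?Js. snd (getNodeP G ?L' w (TNode i a j))) st)" "c = 1 + outdeg E i"
          using P by simp_all
        have new: "dinv G V (LSlot ?L', u, j, fst (getNodeP G ?L' w (TNode i a j)))" if "(i,a,j) \<in> E" for j
          using next_ok[OF wf dL True, of "TNode i a j" j] that Esub by auto
        have "inv G V st1" using I new unfolding P' by (auto intro!: inv_addDs)
        moreover have "mono_st st st1" unfolding P' by (rule mono_trans[OF mono_addSPPF mono_addDs])
        moreover have "c \<le> Kc G V E" using P'(2) od[OF iV] unfolding Kc_def by simp
        ultimately show ?thesis by blast
      next
        case (NT Y)
        let ?v = "GNode ?L' i :: ('n,'t,'v) gss"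
        let ?D2 = "{(LSlot s, ?v, i, Dummy) | s. \<exists>e. (e,s) \<in> tslots G E i Y}"
        have D2: "\<forall>x\<in>?D2. dinv G V x" using tslots_slots iV sl' by fastforce
        have c2: "outdeg E i + card (tslots G E i Y) \<le> Dm V E * (1 + card (slots G))"
          using od[OF iV] ts[OF iV, of Y] by (simp add: algebra_simps)
        show ?thesis
        proof (cases "(?v,w,u) \<in> GE st")
          case True
          have P': "st1 = addDs ?D2 st" "c = 1 + (outdeg E i + card (tslots G E i Y))"
            using P d LSlot L \<open>k < length \<gamma>\<close> NT True by (simp_all add: process_def Let_def)
          have "inv G V st1" using I D2 unfolding P' by (simp add: inv_addDs)
          moreover have "mono_st st st1" unfolding P' by (rule mono_addDs)
          moreover have "c \<le> Kc G V E" using P'(2) c2 unfolding Kc_def by simp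
          ultimately show ?thesis by blast
        next
          case False
          let ?zs = "{z. (?v,z) \<in> Pset st}"
          let ?D1 = "{(LSlot ?L', u, rext z, fst (getNodeP G ?L' w z)) | z. z \<in> ?zs}"
          have "process G E d st = (addDs ?D2 (addDs ?D1 (addSPPF {fst (getNodeP G ?L' w z) | z. z \<in> ?zs}
                   (\<Union>z\<in>?zs. snd (getNodeP G ?L' w z)) (st\<lparr>GE := insert (?v,w,u) (GE st)\<rparr>))),
                   1 + card ?zs + (outdeg E i + card (tslots G E i Y)))"
            unfolding d LSlot L process_def using \<open>k < length \<gamma>\<close> NT False
            by (simp only: Let_def lab.case prod.case sym.case if_True if_False)
          then have P': "st1 = addDs ?D2 (addDs ?D1 (addSPPF {fst (getNodeP G ?L' w z) | z. z \<in> ?zs}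
                   (\<Union>z\<in>?zs. snd (getNodeP G ?L' w z)) (st\<lparr>GE := insert (?v,w,u) (GE st)\<rparr>)))"
                   "c = 1 + card ?zs + (outdeg E i + card (tslots G E i Y))" using P by simp_all
          have zs: "nwf G V z \<and> lext z = i" if "z \<in> ?zs" for z
            using PI that unfolding pinv_def by fastforce
          have D1: "\<forall>x\<in>?D1. dinv G V x"
          proof
            fix x assume "x \<in> ?D1"
            then obtain z where x: "x = (LSlot ?L', u, rext z, fst (getNodeP G ?L' w z))" and z: "z \<in> ?zs" by blast
            show "dinv G V x" unfolding x using next_ok[OF wf dL \<open>k < length \<gamma>\<close>, of z "rext z"] zs[OF z] by simp
          qed
          have ge: "geinv G V (?v,w,u)" unfolding geinv_def using dL \<open>k < length \<gamma>\<close> by auto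
          have "inv G V st1" unfolding P'
            by (rule inv_addDs[OF inv_addDs[OF inv_addSPPF[THEN iffD2, OF inv_GE[OF I ge]] D1] D2])
          moreover have "mono_st st st1" unfolding P'
            by (rule mono_trans[OF mono_trans[OF mono_trans[OF mono_GE mono_addSPPF] mono_addDs] mono_addDs])
          moreover have "card ?zs \<le> B1 G V"
          proof -
            have "?zs \<subseteq> {z. nwf G V z \<and> lext z = i}" using zs by blast
            then show ?thesis using nodesL[OF wf fin, of i] card_mono unfolding B1_def by (metis (no_types, lifting) le_trans)
          qed
          moreover have "c \<le> Kc G V E" using P'(2) c2 calculation(3) unfolding Kc_def by simp
          ultimately show ?thesis by blast
        qed
      qed
    next
      case False
      have pc: "2 + (1 + card (slots G)) * (1 + B1 G V) \<le> Kc G V E" unfolding Kc_def by simp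
      show ?thesis
      proof (cases "\<gamma> = []")
        case True
        have k0: "k = 0" using kle True by simp
        have w0: "w = Dummy" using dL k0 by simp
        let ?y = "getNodeP G ((X,\<gamma>),k) w (ENode i)"
        have y: "fst ?y = NNode i X i" using True k0 w0 by (simp add: getNodeP_def Let_def)
        let ?st2 = "addSPPF {ENode i, fst ?y} (snd ?y) st"
        obtain st1' c2 where r: "popS G u i (fst ?y) ?st2 = (st1', c2)" by fastforce
        have P': "st1 = st1'" "c = 1 + c2" using P d LSlot L False True r by (simp_all add: process_def Let_def)
        have I2: "inv G V ?st2" using I by simp
        have pz: "nwf G V (fst ?y)" "rext (fst ?y) = i" "\<forall>m. gssv u = Some m \<longrightarrow> lext (fst ?y) = m"
          using y iV XN dL w0 by auto
        have "inv G V st1' \<and> mono_st ?st2 st1'"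
          using pop_inv[OF wf I2 _ pz r] dL by simp
        moreover have "c2 \<le> 1 + (1 + card (slots G)) * (1 + B1 G V)"
          using pop_cost[OF r wf fin] GI by simp
        ultimately show ?thesis using P' pc mono_trans[OF mono_addSPPF] by auto
      next
        case False
        have kk: "k = length \<gamma>" "k \<noteq> 0" using kle \<open>\<not> k < length \<gamma>\<close> False by auto
        have wn: "w \<noteq> Dummy" using dL kk by simp
        have P': "popS G u i w st = (st1, c)" using P d LSlot L \<open>\<not> k < length \<gamma>\<close> False by (simp add: process_def)
        have pz: "nwf G V w" "rext w = i" "\<forall>m. gssv u = Some m \<longrightarrow> lext w = m" using dL wn by auto
        have "inv G V st1 \<and> mono_st st st1" using pop_inv[OF wf I _ pz P'] dL by simp
        moreover have "c \<le> 1 + (1 + card (slots G)) * (1 + B1 G V)" using pop_cost[OF P' wf fin GI] .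
        ultimately show ?thesis using pc by auto
      qed
    qed
  qed
qed


definition mkg :: "('n,'t) slot option \<Rightarrow> 'v \<Rightarrow> ('n,'t,'v) gss" where
  "mkg ol m = (case ol of None \<Rightarrow> U0 | Some L \<Rightarrow> GNode L m)"

lemma desc_bound:
  fixes G :: "('n,'t) cfg" and V :: "'v set" and X :: "('n,'t,'v) desc set"
  assumes wf: "cfg_wf G" and fin: "finite V" and DI: "\<forall>d\<in>X. dinv G V d"
  shows "finite X \<and> card X \<le> card V * (1 + card (slots G) * (1 + card (slots G)) * (1 + B1 G V))"
proof -
  let ?OS = "insert None (Some ` slots G)"
  let ?NA = "{w::('n,'t,'v) sppf. nwf G V w}"
  let ?f0 = "(\<lambda>i. (LStart, U0, i, Dummy)) :: 'v \<Rightarrow> ('n,'t,'v) desc"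
  let ?f1 = "(\<lambda>(L,ol,i). (LSlot L, mkg ol i, i, Dummy)) :: _ \<Rightarrow> ('n,'t,'v) desc"
  let ?f2 = "(\<lambda>(L,ol,w). (LSlot L, mkg ol (lext w), rext w, w)) :: _ \<Rightarrow> ('n,'t,'v) desc"
  let ?DA = "?f0 ` V \<union> ?f1 ` (slots G \<times> ?OS \<times> V) \<union> ?f2 ` (slots G \<times> ?OS \<times> ?NA)"
  have fS: "finite (slots G)" using finite_slots[OF wf] .
  have NAeq: "?NA = (\<Union>i\<in>V. {z. nwf G V z \<and> lext z = i})" using nwf_ext by fastforce
  have fNA: "finite ?NA" unfolding NAeq using nodesL[OF wf fin] fin by auto
  have cNA: "card ?NA \<le> card V * B1 G V"
  proof -
    have "card ?NA \<le> (\<Sum>i\<in>V. card {z::('n,'t,'v) sppf. nwf G V z \<and> lext z = i})"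
      unfolding NAeq by (rule card_UN_le[OF fin])
    also have "\<dots> \<le> (\<Sum>i\<in>V. B1 G V)"
      by (rule sum_mono) (use nodesL[OF wf fin] in \<open>auto simp: B1_def\<close>)
    finally show ?thesis by simp
  qed
  have cOS: "card ?OS \<le> 1 + card (slots G)"
    using card_image_le[OF fS, of Some] by (simp add: card_insert_if fS)
  have sub: "X \<subseteq> ?DA"
  proof
    fix d assume dX: "d \<in> X"
    then have dd: "dinv G V d" using DI by blast
    obtain lb u i w where d: "d = (lb,u,i,w)" by (cases d) auto
    show "d \<in> ?DA"
    proof (cases lb)
      case LStart then show ?thesis using dd d by auto
    next
      case (LSlot L)
      obtain ol where ol: "ol \<in> ?OS" "\<And>m. gssv u = Some m \<Longrightarrow> u = mkg ol m" "gssv u = None \<Longrightarrow> u = mkg ol m'" for m'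
      proof (cases u)
        case U0 then show ?thesis using that[of None] by (auto simp: mkg_def)
      next
        case (GNode L' m) then show ?thesis using that[of "Some L'"] dd d LSlot by (auto simp: mkg_def)
      qed
      show ?thesis
      proof (cases "w = Dummy")
        case True
        have "d = ?f1 (L, ol, i)" using True dd d LSlot ol by (cases "gssv u") auto
        moreover have "(L,ol,i) \<in> slots G \<times> ?OS \<times> V" using dd d LSlot ol by auto
        ultimately show ?thesis by blast
      next
        case False
        have "d = ?f2 (L, ol, w)" using False dd d LSlot ol by (cases "gssv u") auto
        moreover have "(L,ol,w) \<in> slots G \<times> ?OS \<times> ?NA" using False dd d LSlot ol by auto
        ultimately show ?thesis by blast
      qed
    qed
  qed
  have fDA: "finite ?DA" using fS fin fNA by auto
  have "card ?DA \<le> card (?f0 ` V) + card (?f1 ` (slots G \<times> ?OS \<times> V)) + card (?f2 ` (slots G \<times> ?OS \<times> ?NA))"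
    by (meson add_le_mono card_Un_le le_refl order_trans)
  also have "\<dots> \<le> card V + card (slots G) * (card ?OS * card V) + card (slots G) * (card ?OS * card ?NA)"
  proof (intro add_mono)
    show "card (?f0 ` V) \<le> card V" by (rule card_image_le[OF fin])
    have "card (?f1 ` (slots G \<times> ?OS \<times> V)) \<le> card (slots G \<times> ?OS \<times> V)"
      by (rule card_image_le) (use fS fin in auto)
    then show "card (?f1 ` (slots G \<times> ?OS \<times> V)) \<le> card (slots G) * (card ?OS * card V)"
      by (simp add: card_cartesian_product)
    have "card (?f2 ` (slots G \<times> ?OS \<times> ?NA)) \<le> card (slots G \<times> ?OS \<times> ?NA)"
      by (rule card_image_le) (use fS fNA in auto)
    then show "card (?f2 ` (slots G \<times> ?OS \<times> ?NA)) \<le> card (slots G) * (card ?OS * card ?NA)"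
      by (simp add: card_cartesian_product)
  qed
  also have "\<dots> \<le> card V + card (slots G) * ((1 + card (slots G)) * card V) + card (slots G) * ((1 + card (slots G)) * (card V * B1 G V))"
    using cOS cNA by (intro add_mono mult_le_mono) auto
  also have "\<dots> = card V * (1 + card (slots G) * (1 + card (slots G)) * (1 + B1 G V))"
    by (simp add: algebra_simps)
  finally show ?thesis using card_mono[OF fDA sub] finite_subset[OF sub fDA] by linarith
qed


lemma runs_bound:
  fixes G :: "('n,'t) cfg" and V :: "'v set"
  assumes wf: "cfg_wf G" and fin: "finite V" and Esub: "E \<subseteq> V \<times> Tms G \<times> V" and Vs: "Vs \<subseteq> V"
    and r: "runs G E st0 c st" and st0: "st0 = init Vs"
  shows "inv G V st \<and> c \<le> Kc G V E * card (U st - R st)"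
  using r st0
proof (induction rule: runs.induct)
  case (runs_refl s)
  have "inv G V (init Vs)" using Vs by (auto simp: inv_def init_def)
  then show ?case using runs_refl by simp
next
  case (runs_step s c st' d st'' c')
  let ?s0 = "st'\<lparr>R := R st' - {d}\<rparr>"
  have I: "inv G V st'" and cb: "c \<le> Kc G V E * card (U st' - R st')" using runs_step.IH runs_step.prems by auto
  have I0: "inv G V ?s0" using I by (auto simp: inv_def)
  have dU: "d \<in> U st'" using I runs_step.hyps(2) by (auto simp: inv_def)
  have dd: "dinv G V d" using I dU by (auto simp: inv_def)
  have po: "inv G V st'' \<and> mono_st ?s0 st'' \<and> c' \<le> Kc G V E"
    using process_ok[OF wf fin Esub I0 dd runs_step.hyps(3)] .
  have fU: "finite (U st'')" using desc_bound[OF wf fin, of "U st''"] po by (auto simp: inv_def)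
  have sub: "insert d (U st' - R st') \<subseteq> U st'' - R st''"
    using po dU unfolding mono_st_def by auto
  have dn: "d \<notin> U st' - R st'" using runs_step.hyps(2) by simp
  have "card (U st' - R st') + 1 \<le> card (U st'' - R st'')"
  proof -
    have f1: "finite (U st' - R st')" using finite_subset[OF sub] fU by auto
    have "card (insert d (U st' - R st')) \<le> card (U st'' - R st'')"
      using sub fU by (intro card_mono) auto
    then show ?thesis using dn f1 by simp
  qed
  then have m: "Kc G V E * (card (U st' - R st') + 1) \<le> Kc G V E * card (U st'' - R st'')"
    by (rule mult_le_mono2)
  have "c + c' \<le> Kc G V E * card (U st' - R st') + Kc G V E" using cb po by (intro add_mono) auto
  also have "\<dots> = Kc G V E * (card (U st' - R st') + 1)" by simp
  finally have "c + c' \<le> Kc G V E * card (U st'' - R st'')" using m by linarith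
  then show ?case using po by simp
qed


lemma arith1:
  fixes n D A s B :: nat
  assumes n: "n \<ge> 1" and D: "D \<ge> 1" and B: "B = n * A + 1"
  shows "2 + B + D * (1 + s) + (1 + s) * (1 + B) \<le> n * D * (2 + (A + 1) + (1 + s) + (1 + s) * (A + 2))"
proof -
  have nD: "n \<le> n * D" "D \<le> n * D" "1 \<le> n * D" using n D by auto
  have b1: "1 + B \<le> n * (A + 2)" using B n by (simp add: algebra_simps)
  also have "\<dots> \<le> n * D * (A + 2)" using nD(1) by (rule mult_le_mono1)
  finally have b1': "1 + B \<le> n * D * (A + 2)" .
  have b0: "B \<le> n * D * (A + 1)"
  proof -
    have "B \<le> n * (A + 1)" using B n by (simp add: algebra_simps)
    also have "\<dots> \<le> n * D * (A + 1)" using nD(1) by (rule mult_le_mono1)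
    finally show ?thesis .
  qed
  have "2 + B + D * (1 + s) + (1 + s) * (1 + B)
        \<le> n * D * 2 + n * D * (A + 1) + n * D * (1 + s) + (1 + s) * (n * D * (A + 2))"
    using nD b0 b1' by (intro add_mono mult_le_mono) auto
  also have "\<dots> = n * D * (2 + (A + 1) + (1 + s) + (1 + s) * (A + 2))" by (simp add: algebra_simps)
  finally show ?thesis .
qed

lemma arith2:
  fixes n A s B :: nat
  assumes n: "n \<ge> 1" and B: "B = n * A + 1"
  shows "n * (1 + s * (1 + s) * (1 + B)) \<le> n * n * (1 + s * (1 + s) * (A + 2))"
proof -
  have b1: "1 + B \<le> n * (A + 2)" using B n by (simp add: algebra_simps)
  have "1 + s * (1 + s) * (1 + B) \<le> n + s * (1 + s) * (n * (A + 2))"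
    using n b1 by (intro add_mono mult_le_mono) auto
  also have "\<dots> = n * (1 + s * (1 + s) * (A + 2))" by (simp add: algebra_simps)
  finally have "n * (1 + s * (1 + s) * (1 + B)) \<le> n * (n * (1 + s * (1 + s) * (A + 2)))"
    by (rule mult_le_mono2)
  then show ?thesis by (simp only: mult.assoc)
qed

theorem theorem4:
  fixes G :: "('n,'t) cfg"
  assumes "cfg_wf G"
  shows "\<exists>C::real. \<forall>(V::'v set) (E::('v \<times> 't \<times> 'v) set) Vs Vf c st.
           finite V \<and> E \<subseteq> V \<times> Tms G \<times> V \<and> Vs \<subseteq> V \<and> Vf \<subseteq> V \<and>
           runs G E (init Vs) c st
           \<longrightarrow> real c \<le> C * real (card V) ^ 3 * real (max 1 (maxdeg V E))"
proof -
  note wf = assms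
  define s where "s = card (slots G)"
  define A where "A = card (Tms G) + card (Nts G) + card (slots G)"
  define k1 where "k1 = 2 + (A + 1) + (1 + s) + (1 + s) * (A + 2)"
  define k2 where "k2 = 1 + s * (1 + s) * (A + 2)"
  show ?thesis
  proof (intro exI[of _ "real (k1 * k2)"] allI impI)
    fix V :: "'v set" and E :: "('v \<times> 't \<times> 'v) set" and Vs Vf c and st :: "('n,'t,'v) gstate"
    assume h: "finite V \<and> E \<subseteq> V \<times> Tms G \<times> V \<and> Vs \<subseteq> V \<and> Vf \<subseteq> V \<and> runs G E (init Vs) c st"
    then have fin: "finite V" and Esub: "E \<subseteq> V \<times> Tms G \<times> V" and Vs: "Vs \<subseteq> V"
      and r: "runs G E (init Vs) c st" by auto
    have rb: "inv G V st \<and> c \<le> Kc G V E * card (U st - R st)"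
      using runs_bound[OF wf fin Esub Vs r refl] .
    have db: "finite (U st) \<and> card (U st) \<le> card V * (1 + s * (1 + s) * (1 + B1 G V))"
      using desc_bound[OF wf fin, of "U st"] rb unfolding s_def by (auto simp: inv_def)
    have "card (U st - R st) \<le> card (U st)" using db by (intro card_mono) auto
    then have c1: "c \<le> Kc G V E * card (U st)" using rb by (meson le_trans mult_le_mono2)
    define n where "n = card V"
    define D where "D = Dm V E"
    have D1: "D \<ge> 1" unfolding D_def Dm_def by simp
    have cn: "c \<le> k1 * k2 * (n ^ 3 * D)"
    proof (cases "n = 0")
      case True
      then have "card (U st) = 0" using db unfolding n_def by simp
      then show ?thesis using c1 by simp
    next
      case False
      then have n1: "n \<ge> 1" by simp
      have B: "B1 G V = n * A + 1" unfolding B1_def n_def A_def by simp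
      have K: "Kc G V E \<le> n * D * k1"
        unfolding Kc_def k1_def D_def[symmetric] s_def[symmetric]
        using arith1[OF n1 D1 B, of s] by (simp add: s_def)
      have Ub: "card (U st) \<le> n * n * k2"
        using db arith2[OF n1 B, of s] unfolding k2_def n_def by linarith
      have "c \<le> (n * D * k1) * (n * n * k2)" using c1 K Ub by (meson le_trans mult_le_mono)
      also have "\<dots> = k1 * k2 * (n ^ 3 * D)" by (simp add: power3_eq_cube algebra_simps)
      finally show ?thesis .
    qed
    then have "real c \<le> real (k1 * k2 * (n ^ 3 * D))" by (simp only: of_nat_le_iff)
    then show "real c \<le> real (k1 * k2) * real (card V) ^ 3 * real (max 1 (maxdeg V E))"
      unfolding n_def D_def Dm_def by (simp add: algebra_simps)
  qed
qed

end
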